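(* Let $A^*\in\mathbb C^{N\times n}$ be isometric ($AA^*=I_n$), let $\mathcal X=\mathbb R^n$ or $\mathcal X=\mathbb R^n_+$, let $x_0\in\mathcal X\setminus\{0\}$, $b=|A^*x_0|$, and let $\mathcal F(x)=\big[A\big(b\odot\frac{A^*x}{|A^*x|}\big)\big]_{\mathcal X}$. Suppose $$\tilde\lambda_2:=\max\{\|\Im(B^* )u\|:\ u\in\mathbb R^n,\ \langle u,x_0\rangle=0,\ \|u\|=1\}<1.$$ Then for every $0<\epsilon<1-\tilde\lambda_2^2$ there is a neighborhood of $x_0$ such that for every $x^{(1)}$ in it, the iterates $x^{(k+1)}=\mathcal F^k(x^{(1)})$ satisfy $$\|\alpha^{(k+1)}x^{(k+1)}-x_0\|\le(\tilde\lambda_2^2+\epsilon)\|\alpha^{(k)}x^{(k)}-x_0\|\quad\text{for all }k\ge1,$$ where $\alpha^{(k)}:=\arg\min_{\alpha\in\{\pm1\}}\|\alpha x^{(k)}-x_0\|$, and $\alpha^{(k)}:=1$ if $\mathcal X=\mathbb R^n_+$.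
   Context: $|y|$ is the componentwise modulus, $\odot$ the componentwise product, $y/|y|$ the componentwise quotient with convention $y(j)/|y(j)|=1$ if $y(j)=0$. $[\cdot]_{\mathcal X}$ is Euclidean projection onto $\mathcal X$ (for $\mathcal X=\mathbb R^n$: $x\mapsto\Re x$; for $\mathbb R^n_+$: $x\mapsto\max(\Re x,0)$ componentwise). $B:=A\,\mathrm{diag}\big(\frac{A^*x_0}{|A^*x_0|}\big)$ and $\Im(B^* )$ is its entrywise imaginary part. *)

theory Defs
  imports "HOL-Analysis.Analysis"
begin

definition cvec :: "real^'n \<Rightarrow> complex^'n" where
  "cvec x = (\<chi> i. complex_of_real (x $ i))"

definition adj :: "complex^'b^'a \<Rightarrow> complex^'a^'b" where
  "adj M = (\<chi> i j. cnj (M $ j $ i))"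

definition cabs :: "complex^'n \<Rightarrow> real^'n" where
  "cabs y = (\<chi> j. cmod (y $ j))"

definition cphase :: "complex^'n \<Rightarrow> complex^'n" where
  "cphase y = (\<chi> j. if y $ j = 0 then 1 else y $ j / complex_of_real (cmod (y $ j)))"

text \<open>Constraint set X: pos = False means X = R^n, pos = True means X = R^n_+.\<close>
definition inX :: "bool \<Rightarrow> real^'n \<Rightarrow> bool" where
  "inX pos x = (pos \<longrightarrow> (\<forall>i. 0 \<le> x $ i))"

definition projX :: "bool \<Rightarrow> complex^'n \<Rightarrow> real^'n" where
  "projX pos z = (\<chi> i. if pos then max (Re (z $ i)) 0 else Re (z $ i))"

definition PR_map :: "bool \<Rightarrow> complex^'N^'n \<Rightarrow> real^'n \<Rightarrow> real^'n \<Rightarrow> real^'n" where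
  "PR_map pos A x0 x =
     projX pos (A *v (\<chi> j. complex_of_real (cabs (adj A *v cvec x0) $ j)
                            * cphase (adj A *v cvec x) $ j))"

text \<open>B = A diag(A^* x0 / |A^* x0|).\<close>
definition Bmat :: "complex^'N^'n \<Rightarrow> real^'n \<Rightarrow> complex^'N^'n" where
  "Bmat A x0 = (\<chi> i j. A $ i $ j * cphase (adj A *v cvec x0) $ j)"

definition ImBadj :: "complex^'N^'n \<Rightarrow> real^'n \<Rightarrow> real^'n^'N" where
  "ImBadj A x0 = (\<chi> j i. Im (adj (Bmat A x0) $ j $ i))"

text \<open>lambda_2 tilde: maximum of ||Im(B^*) u|| over unit u orthogonal to x0.
  (Sup with 0 inserted: equals the max when the set is nonempty, and 0 when n = 1.)\<close>
definition lambda2 :: "complex^'N^'n \<Rightarrow> real^'n \<Rightarrow> real" where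
  "lambda2 A x0 = Sup (insert 0 ((\<lambda>u. norm (ImBadj A x0 *v u)) ` {u. inner u x0 = 0 \<and> norm u = 1}))"

definition alpha_sel :: "bool \<Rightarrow> real^'n \<Rightarrow> real^'n \<Rightarrow> real" where
  "alpha_sel pos x0 x = (if pos then 1 else if norm (x - x0) \<le> norm ((-1) *\<^sub>R x - x0) then 1 else -1)"

end

theory Submission imports Defs begin

lemma key_scalar:
  fixes ph t :: complex and b :: real
  assumes ph: "cmod ph = 1" and b: "0 < b" and t: "cmod t \<le> b/2"
  shows "cmod (complex_of_real b * (ph*(complex_of_real b+t)/complex_of_real(cmod(ph*(complex_of_real b+t))))
            - ph*complex_of_real b - ph*(\<i>*complex_of_real(Im t))) \<le> 4*(cmod t)^2/b"
proof -
  define s where "s = complex_of_real b + t"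
  define \<rho> where "\<rho> = cmod s"
  have Res: "Re s = b + Re t" "Im s = Im t" by (auto simp: s_def)
  have ret: "\<bar>Re t\<bar> \<le> cmod t" "\<bar>Im t\<bar> \<le> cmod t" by (auto simp: abs_Re_le_cmod abs_Im_le_cmod)
  have rho_ge: "\<rho> \<ge> b/2"
  proof -
    have "cmod (complex_of_real b) - cmod t \<le> cmod s" unfolding s_def by (metis norm_diff_ineq)
    thus ?thesis using b t by (simp add: \<rho>_def)
  qed
  have rho_b: "\<bar>b - \<rho>\<bar> \<le> cmod t"
  proof -
    have "\<bar>cmod s - cmod (complex_of_real b)\<bar> \<le> cmod (s - complex_of_real b)" by (rule norm_triangle_ineq3)
    thus ?thesis using b by (simp add: \<rho>_def s_def abs_minus_commute)
  qed
  have Re_ge: "Re s \<ge> b/2" using Res ret t by linarith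
  have rho2: "\<rho>^2 = (Re s)^2 + (Im s)^2" by (simp add: \<rho>_def cmod_power2)
  have rs: "\<rho> - Re s \<ge> 0" using complex_Re_le_cmod[of s] by (simp add: \<rho>_def)
  have prod: "(\<rho> - Re s) * (\<rho> + Re s) = (Im t)^2" using rho2 Res by (simp add: power2_eq_square algebra_simps)
  have "(\<rho> - Re s) * b \<le> (\<rho> - Re s) * (\<rho> + Re s)"
    using rs rho_ge Re_ge by (intro mult_left_mono) auto
  also have "\<dots> \<le> (cmod t)^2" using prod by (simp add: cmod_power2)
  finally have d1: "(\<rho> - Re s) * b \<le> (cmod t)^2" .
  have rpos: "\<rho> > 0" using rho_ge b by linarith
  define w where "w = complex_of_real b * (s / complex_of_real \<rho>) - complex_of_real b - \<i>*complex_of_real(Im t)"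
  have Rew: "Re w = b * (Re s - \<rho>) / \<rho>" using rpos by (simp add: w_def field_simps)
  have Imw: "Im w = Im t * (b - \<rho>) / \<rho>" using rpos Res by (simp add: w_def field_simps)
  have "\<bar>Re w\<bar> = b * (\<rho> - Re s) / \<rho>" using Rew rs b rpos by (simp add: abs_mult abs_div_pos abs_minus_commute)
  also have "\<dots> \<le> (cmod t)^2 / (b/2)"
    using d1 rho_ge b rs by (intro frac_le) (auto simp: mult.commute)
  finally have r1: "\<bar>Re w\<bar> \<le> 2*(cmod t)^2/b" by (simp add: mult.commute)
  have "\<bar>Im w\<bar> = \<bar>Im t\<bar> * \<bar>b - \<rho>\<bar> / \<rho>" using Imw rpos by (simp add: abs_mult)
  also have "\<dots> \<le> (cmod t * cmod t) / (b/2)"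
    using ret rho_b rho_ge b by (intro frac_le mult_mono) auto
  finally have r2: "\<bar>Im w\<bar> \<le> 2*(cmod t)^2/b" by (simp add: power2_eq_square mult.commute)
  have "cmod w \<le> \<bar>Re w\<bar> + \<bar>Im w\<bar>" by (rule cmod_le)
  hence cw: "cmod w \<le> 4*(cmod t)^2/b" using r1 r2 by simp
  have eq: "complex_of_real b * (ph*(complex_of_real b+t)/complex_of_real(cmod(ph*(complex_of_real b+t))))
            - ph*complex_of_real b - ph*(\<i>*complex_of_real(Im t)) = ph * w"
  proof -
    have "cmod(ph*(complex_of_real b+t)) = \<rho>" using ph by (simp add: norm_mult \<rho>_def s_def)
    thus ?thesis by (simp add: w_def s_def algebra_simps)
  qed
  show ?thesis unfolding eq using cw ph by (simp add: norm_mult)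
qed

definition cdot :: "complex^'n \<Rightarrow> complex^'n \<Rightarrow> complex" where
  "cdot u v = (\<Sum>i\<in>UNIV. cnj (u$i) * v$i)"

lemma norm_sq_vec: "(norm (x::'a::real_normed_vector^'n))^2 = (\<Sum>i\<in>UNIV. (norm (x$i))^2)"
  unfolding norm_vec_def L2_set_def by (simp add: sum_nonneg)

lemma cdot_self: "cdot v v = complex_of_real ((norm v)^2)"
  unfolding cdot_def norm_sq_vec of_real_sum by (simp add: complex_norm_square mult.commute del: of_real_power)

lemma cdot_adj: "cdot (A *v w) v = cdot w (adj A *v v)"
proof -
  have "(\<Sum>i\<in>UNIV. cnj (\<Sum>j\<in>UNIV. A$i$j * w$j) * v$i) = (\<Sum>i\<in>UNIV. \<Sum>j\<in>UNIV. cnj (w$j) * (cnj (A$i$j) * v$i))"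
    by (simp add: sum_distrib_right sum_distrib_left mult_ac)
  also have "\<dots> = (\<Sum>j\<in>UNIV. \<Sum>i\<in>UNIV. cnj (w$j) * (cnj (A$i$j) * v$i))" by (rule sum.swap)
  also have "\<dots> = (\<Sum>j\<in>UNIV. cnj (w$j) * (\<Sum>i\<in>UNIV. cnj (A$i$j) * v$i))" by (simp add: sum_distrib_left)
  finally show ?thesis by (simp add: cdot_def adj_def matrix_vector_mult_def mult_ac)
qed

lemma adj_adj[simp]: "adj (adj A) = A"
  unfolding adj_def by (simp add: vec_eq_iff)

lemma norm_cmod_vec: "norm (\<chi> i. cmod (u$i)) = norm u"
  unfolding norm_vec_def by simp

lemma cdot_cs: "cmod (cdot u v) \<le> norm u * norm v"
proof -
  have "cmod (cdot u v) \<le> (\<Sum>i\<in>UNIV. cmod (u$i) * cmod (v$i))"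
    unfolding cdot_def by (rule order_trans[OF norm_sum]) (simp add: norm_mult)
  also have "\<dots> = inner (\<chi> i. cmod (u$i)) (\<chi> i. cmod (v$i))" by (simp add: inner_vec_def)
  also have "\<dots> \<le> norm u * norm v" using norm_cauchy_schwarz norm_cmod_vec by metis
  finally show ?thesis .
qed

lemma norm_adj_iso:
  assumes iso: "A ** adj A = mat 1"
  shows "norm (adj A *v v) = norm v"
proof -
  have "cdot (adj A *v v) (adj A *v v) = cdot v (A *v (adj A *v v))"
    using cdot_adj[of "adj A"] by simp
  also have "\<dots> = cdot v v" by (simp add: matrix_vector_mul_assoc iso)
  finally have "complex_of_real ((norm (adj A *v v))^2) = complex_of_real ((norm v)^2)" by (simp only: cdot_self)
  hence "(norm (adj A *v v))^2 = (norm v)^2" by (simp only: of_real_eq_iff)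
  thus ?thesis by (simp add: power2_eq_iff_nonneg)
qed

lemma norm_A_iso:
  assumes iso: "A ** adj A = mat 1"
  shows "norm (A *v w) \<le> norm w"
proof -
  have "(norm (A *v w))^2 = Re (cdot (A *v w) (A *v w))" by (simp add: cdot_self)
  also have "\<dots> = Re (cdot w (adj A *v (A *v w)))" by (simp add: cdot_adj)
  also have "\<dots> \<le> cmod (cdot w (adj A *v (A *v w)))" by (rule complex_Re_le_cmod)
  also have "\<dots> \<le> norm w * norm (A *v w)" using cdot_cs norm_adj_iso[OF iso] by metis
  finally have "norm (A *v w) * norm (A *v w) \<le> norm w * norm (A *v w)" by (simp add: power2_eq_square)
  thus ?thesis by (cases "norm (A *v w) = 0") (auto simp: mult_le_cancel_right)
qed

lemma norm_cvec: "norm (cvec x) = norm x"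
  unfolding norm_vec_def cvec_def by simp

lemma STS_bound:
  fixes S :: "real^'n^'m"
  assumes Sb: "\<And>e. norm (S *v e) \<le> l * norm e" and l: "0 \<le> l"
  shows "norm (transpose S *v (S *v e)) \<le> l^2 * norm e"
proof -
  define w where "w = S *v e"
  define v where "v = transpose S *v w"
  have "(norm v)^2 = inner v v" by (simp add: power2_norm_eq_inner)
  also have "\<dots> = inner w (S *v v)" unfolding v_def by (simp add: dot_lmul_matrix)
  also have "\<dots> \<le> norm w * norm (S *v v)" by (rule norm_cauchy_schwarz)
  also have "\<dots> \<le> norm w * (l * norm v)" by (rule mult_left_mono[OF Sb]) simp
  finally have "norm v * norm v \<le> (l * norm w) * norm v" by (simp add: power2_eq_square mult_ac)
  hence "norm v \<le> l * norm w" by (cases "norm v = 0") (auto simp: mult_le_cancel_right l)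
  also have "\<dots> \<le> l * (l * norm e)" using Sb[of e] l unfolding w_def by (rule mult_left_mono)
  finally show ?thesis by (simp add: v_def w_def power2_eq_square mult_ac)
qed

lemma lam_bound:
  fixes M :: "real^'n^'m" and x0 :: "real^'n"
  assumes x0: "x0 \<noteq> 0" and Mx0: "M *v x0 = 0"
  defines "l \<equiv> Sup (insert 0 ((\<lambda>u. norm (M *v u)) ` {u. inner u x0 = 0 \<and> norm u = 1}))"
  shows "0 \<le> l" and "norm (M *v e) \<le> l * norm e"
proof -
  obtain K where K: "\<And>x. norm (M *v x) \<le> norm x * K"
    using bounded_linear.bounded[OF matrix_vector_mul_bounded_linear[of M]] by blast
  have bdd: "bdd_above (insert 0 ((\<lambda>u. norm (M *v u)) ` {u. inner u x0 = 0 \<and> norm u = 1}))"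
    unfolding bdd_above_def using K by (intro exI[of _ "max 0 K"]) (auto intro: order_trans[OF K] simp: le_max_iff_disj)
  show l0: "0 \<le> l" unfolding l_def by (rule cSup_upper[OF insertI1 bdd])
  have lu: "norm (M *v u) \<le> l" if "inner u x0 = 0" "norm u = 1" for u
    unfolding l_def using that by (intro cSup_upper[OF _ bdd]) auto
  define c where "c = inner e x0 / inner x0 x0"
  define p where "p = e - c *\<^sub>R x0"
  have x0x0: "inner x0 x0 \<noteq> 0" using x0 by simp
  have px0: "inner p x0 = 0" unfolding p_def c_def using x0x0 by (simp add: inner_diff_left)
  have Me: "M *v e = M *v p" unfolding p_def
    by (simp add: matrix_vector_mult_diff_distrib matrix_vector_mult_scaleR Mx0)
  have "(norm e)^2 = (norm p)^2 + c*c*inner x0 x0"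
  proof -
    have "e = p + c *\<^sub>R x0" by (simp add: p_def)
    hence "(norm e)^2 = inner (p + c *\<^sub>R x0) (p + c *\<^sub>R x0)" by (simp add: power2_norm_eq_inner)
    also have "\<dots> = (norm p)^2 + c*c*inner x0 x0"
      using px0 by (simp add: inner_add_left inner_add_right power2_norm_eq_inner inner_commute)
    finally show ?thesis .
  qed
  hence "(norm p)^2 \<le> (norm e)^2" by simp
  hence pe: "norm p \<le> norm e" by (simp add: power2_le_iff_abs_le)
  show "norm (M *v e) \<le> l * norm e"
  proof (cases "p = 0")
    case True thus ?thesis using Me l0 by simp
  next
    case False
    define u where "u = (1 / norm p) *\<^sub>R p"
    have "inner u x0 = 0" "norm u = 1" using px0 False by (auto simp: u_def)
    hence "norm (M *v u) \<le> l" by (rule lu)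
    moreover have "M *v p = norm p *\<^sub>R (M *v u)" using False
      by (simp add: u_def matrix_vector_mult_scaleR)
    ultimately have "norm (M *v p) \<le> norm p * l" by (simp add: mult_left_mono)
    also have "\<dots> \<le> l * norm e" using pe l0 by (simp add: mult.commute mult_left_mono)
    finally show ?thesis using Me by simp
  qed
qed

lemma norm_le_sum_vec: "norm (x::'a::real_normed_vector^'n) \<le> (\<Sum>i\<in>UNIV. norm (x$i))"
  unfolding norm_vec_def by (rule L2_set_le_sum) simp

definition delta0 :: "complex^'N^'n \<Rightarrow> real^'n \<Rightarrow> real" where
  "delta0 A x0 = Min (insert 1 ((\<lambda>j. cabs (adj A *v cvec x0) $ j) ` {j. 0 < cabs (adj A *v cvec x0) $ j}))"

lemma delta0_pos: "0 < delta0 A x0"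
  unfolding delta0_def by (subst Min_gr_iff) auto

lemma delta0_le: "0 < cabs (adj A *v cvec x0) $ j \<Longrightarrow> delta0 A x0 \<le> cabs (adj A *v cvec x0) $ j"
  unfolding delta0_def by (rule Min_le) auto

lemma one_step:
  fixes A :: "complex^'N^'n" and x0 x :: "real^'n"
  assumes iso: "A ** adj A = mat 1" and x0X: "inX pos x0" and x0nz: "x0 \<noteq> 0"
    and ex: "norm (x - x0) \<le> delta0 A x0 / 2"
  shows "norm (PR_map pos A x0 x - x0) \<le> (lambda2 A x0)^2 * norm (x - x0) + 4 / delta0 A x0 * (norm (x - x0))^2"
proof -
  define y0 where "y0 = adj A *v cvec x0"
  define b where "b = cabs y0"
  define ph where "ph = cphase y0"
  define M where "M = ImBadj A x0"
  define S :: "real^'n^'N" where "S = (\<chi> j i. if 0 < b$j then M$j$i else 0)"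
  define e where "e = x - x0"
  define d where "d = adj A *v cvec e"
  define \<delta> where "\<delta> = delta0 A x0"
  define z where "z = (\<chi> j. complex_of_real (b$j) * cphase (adj A *v cvec x) $ j)"
  define L where "L = (\<chi> j. if 0 < b$j then ph$j * (\<i> * complex_of_real (Im (cnj (ph$j) * d$j))) else 0)"
  define r where "r = z - y0 - L"
  have dpos: "0 < \<delta>" unfolding \<delta>_def by (rule delta0_pos)
  have dle: "\<delta> \<le> b$j" if "0 < b$j" for j
    using that delta0_le unfolding \<delta>_def b_def y0_def by blast
  have y: "adj A *v cvec x = y0 + d"
  proof -
    have "cvec x = cvec x0 + cvec e" by (simp add: cvec_def e_def vec_eq_iff)
    thus ?thesis by (simp add: y0_def d_def matrix_vector_right_distrib)
  qed
  have nd: "norm d = norm e" unfolding d_def using norm_adj_iso[OF iso] norm_cvec by metis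
  have Fx: "PR_map pos A x0 x = projX pos (A *v z)"
    unfolding PR_map_def z_def b_def y0_def ..
  have Ay0: "A *v y0 = cvec x0"
    unfolding y0_def by (simp add: matrix_vector_mul_assoc iso)
  have step1: "norm (PR_map pos A x0 x - x0) \<le> norm (\<chi> i. Re ((A *v z)$i) - x0$i)"
    unfolding Fx
  proof (rule norm_le_componentwise_cart)
    fix i
    show "norm ((projX pos (A *v z) - x0) $ i) \<le> norm ((\<chi> i. Re ((A *v z)$i) - x0$i) $ i)"
      using x0X unfolding inX_def projX_def by (cases pos) (auto simp: max_def dest: spec[of _ i])
  qed
  have zdec: "z = y0 + L + r" by (simp add: r_def)
  have step2: "(\<chi> i. Re ((A *v z)$i) - x0$i) = (\<chi> i. Re ((A *v L)$i)) + (\<chi> i. Re ((A *v r)$i))"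
    unfolding zdec by (simp add: matrix_vector_right_distrib Ay0 vec_eq_iff cvec_def)
  have Mji: "M$j$i = - Im (A$i$j * ph$j)" for i j
    by (simp add: M_def ImBadj_def adj_def Bmat_def ph_def y0_def)
  have Imtg: "Im (cnj (ph$j) * (adj A *v cvec v)$j) = (M *v v)$j" for j v
  proof -
    have "cnj (ph$j) * (adj A *v cvec v)$j = (\<Sum>k\<in>UNIV. cnj (A$k$j * ph$j) * complex_of_real (v$k))"
      by (simp add: matrix_vector_mult_def adj_def cvec_def sum_distrib_left mult_ac)
    hence "Im (cnj (ph$j) * (adj A *v cvec v)$j) = (\<Sum>k\<in>UNIV. Im (cnj (A$k$j * ph$j)) * v$k)"
      by (simp add: Im_sum)
    thus ?thesis by (simp add: matrix_vector_mult_def Mji)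
  qed
  have Imt: "Im (cnj (ph$j) * d$j) = (M *v e)$j" for j
    unfolding d_def by (rule Imtg)
  have step3: "(\<chi> i. Re ((A *v L)$i)) = transpose S *v (S *v e)"
  proof -
    have "Re (A$i$j * L$j) = S$j$i * (S *v e)$j" for i j
    proof (cases "0 < b$j")
      case True
      have Se: "(S *v e)$j = (M *v e)$j" using True by (simp add: S_def matrix_vector_mult_def)
      have Lj: "L$j = ph$j * (\<i> * complex_of_real ((S *v e)$j))" using True Se Imt by (simp add: L_def)
      have aux: "Re (a * (p * (\<i> * complex_of_real q))) = - Im (a * p) * q" for a p :: complex and q :: real
        by (simp add: algebra_simps)
      have Sji: "S$j$i = - Im (A$i$j * ph$j)" using True by (simp add: S_def Mji)
      show ?thesis unfolding Lj aux Sji by (simp add: mult.assoc)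
    next
      case False thus ?thesis by (simp add: L_def S_def)
    qed
    thus ?thesis by (simp add: vec_eq_iff matrix_vector_mult_def transpose_def Re_sum)
  qed
  have step4: "norm (\<chi> i. Re ((A *v r)$i)) \<le> norm r"
  proof -
    have "norm (\<chi> i. Re ((A *v r)$i)) \<le> norm (A *v r)"
      by (rule norm_le_componentwise_cart) (simp add: abs_Re_le_cmod)
    also have "\<dots> \<le> norm r" by (rule norm_A_iso[OF iso])
    finally show ?thesis .
  qed
  have rj: "cmod (r$j) \<le> 4 / \<delta> * (cmod (d$j))^2" for j
  proof (cases "0 < b$j")
    case False
    hence b0: "b$j = 0" by (simp add: b_def cabs_def)
    hence "y0$j = 0" by (simp add: b_def cabs_def)
    thus ?thesis using b0 False dpos by (simp add: r_def z_def L_def)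
  next
    case True
    have bj: "b$j = cmod (y0$j)" by (simp add: b_def cabs_def)
    have y0nz: "y0$j \<noteq> 0" using True bj by auto
    have phj: "ph$j = y0$j / complex_of_real (b$j)" using y0nz bj by (simp add: ph_def cphase_def)
    have cph: "cmod (ph$j) = 1" using phj bj y0nz by (simp add: norm_divide)
    have y0j: "y0$j = ph$j * complex_of_real (b$j)" using phj True by simp
    define t where "t = cnj (ph$j) * d$j"
    have ct: "cmod t = cmod (d$j)" using cph by (simp add: t_def norm_mult)
    have "cmod (d$j) \<le> norm d" unfolding norm_vec_def by (rule member_le_L2_set) simp_all
    hence tb: "cmod t \<le> b$j / 2" using ct nd ex dle[OF True] unfolding e_def \<delta>_def by linarith
    have ppc: "ph$j * cnj (ph$j) = 1"
      using cph by (metis complex_norm_square mult.commute of_real_1 power_one)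
    have yj: "(y0 + d)$j = ph$j * (complex_of_real (b$j) + t)"
      using ppc by (simp add: y0j t_def algebra_simps)
    have ynz: "(y0 + d)$j \<noteq> 0"
    proof
      assume "(y0 + d)$j = 0"
      hence "complex_of_real (b$j) + t = 0" using yj cph by auto
      hence "cmod t = b$j" by (metis add_eq_0_iff norm_minus_cancel norm_of_real abs_of_pos True)
      thus False using tb True by linarith
    qed
    have zj: "z$j = complex_of_real (b$j) * (ph$j * (complex_of_real (b$j) + t) / complex_of_real (cmod (ph$j * (complex_of_real (b$j) + t))))"
      unfolding z_def y using ynz yj by (simp add: cphase_def)
    have rj: "r$j = complex_of_real (b$j) * (ph$j * (complex_of_real (b$j) + t) / complex_of_real (cmod (ph$j * (complex_of_real (b$j) + t))))
            - ph$j * complex_of_real (b$j) - ph$j * (\<i> * complex_of_real (Im t))"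
      using True by (simp add: r_def zj y0j L_def t_def)
    have "cmod (r$j) \<le> 4 * (cmod t)^2 / b$j" unfolding rj by (rule key_scalar[OF cph True tb])
    also have "\<dots> \<le> 4 * (cmod t)^2 / \<delta>" using dle[OF True] dpos by (intro divide_left_mono) auto
    finally show ?thesis using ct by simp
  qed
  have step5: "norm r \<le> 4 / \<delta> * (norm e)^2"
  proof -
    have "norm r \<le> (\<Sum>j\<in>UNIV. cmod (r$j))" by (rule norm_le_sum_vec)
    also have "\<dots> \<le> (\<Sum>j\<in>UNIV. 4 / \<delta> * (cmod (d$j))^2)" by (rule sum_mono) (rule rj)
    also have "\<dots> = 4 / \<delta> * (norm d)^2" by (simp add: norm_sq_vec sum_distrib_left)
    finally show ?thesis using nd by simp
  qed
  have lam0: "0 \<le> lambda2 A x0" and Mb: "\<And>v. norm (M *v v) \<le> lambda2 A x0 * norm v"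
  proof -
    have Mx0: "M *v x0 = 0"
    proof -
      have "(M *v x0)$j = 0" for j
      proof -
        have "(M *v x0)$j = Im (cnj (ph$j) * y0$j)"
          using Imtg[of j x0] by (simp add: y0_def)
        also have "\<dots> = 0"
        proof (cases "y0$j = 0")
          case True thus ?thesis by simp
        next
          case False
          hence "cnj (ph$j) * y0$j = complex_of_real (cmod (y0$j))"
            by (simp add: ph_def cphase_def complex_norm_square[symmetric] power2_eq_square mult.commute)
          thus ?thesis by simp
        qed
        finally show ?thesis .
      qed
      thus ?thesis by (simp add: vec_eq_iff)
    qed
    have lam_eq: "lambda2 A x0 = Sup (insert 0 ((\<lambda>u. norm (M *v u)) ` {u. inner u x0 = 0 \<and> norm u = 1}))"
      by (simp add: lambda2_def M_def)
    show "0 \<le> lambda2 A x0" unfolding lam_eq by (rule lam_bound(1)[OF x0nz Mx0])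
    show "norm (M *v v) \<le> lambda2 A x0 * norm v" for v unfolding lam_eq by (rule lam_bound(2)[OF x0nz Mx0])
  qed
  have Sb: "norm (S *v v) \<le> lambda2 A x0 * norm v" for v
  proof -
    have "norm (S *v v) \<le> norm (M *v v)"
      by (rule norm_le_componentwise_cart) (case_tac "0 < b $ i", simp_all add: S_def matrix_vector_mult_def)
    thus ?thesis using Mb[of v] by linarith
  qed
  have "norm (PR_map pos A x0 x - x0) \<le> norm (transpose S *v (S *v e)) + norm (\<chi> i. Re ((A *v r)$i))"
    using step1 unfolding step2 step3 by (meson norm_triangle_ineq order_trans)
  also have "\<dots> \<le> (lambda2 A x0)^2 * norm e + 4 / \<delta> * (norm e)^2"
    using STS_bound[OF Sb lam0, of e] step4 step5 by linarith
  finally show ?thesis by (simp add: e_def \<delta>_def)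
qed

lemma alpha_one:
  fixes x x0 :: "real^'n"
  assumes "norm (x - x0) < norm x0"
  shows "alpha_sel pos x0 x = 1"
proof -
  have "x0 + x0 = (x + x0) - (x - x0)" by simp
  hence "norm (x0 + x0) \<le> norm (x + x0) + norm (x - x0)" by (metis norm_triangle_ineq4)
  moreover have "norm (x0 + x0) = 2 * norm x0" using norm_scaleR[of 2 x0] by (simp add: scaleR_2)
  moreover have "norm ((-1) *\<^sub>R x - x0) = norm (x + x0)"
    by (metis minus_diff_eq norm_minus_cancel scaleR_minus1_left diff_minus_eq_add minus_add_distrib add.commute)
  ultimately have "norm (x - x0) \<le> norm ((-1) *\<^sub>R x - x0)" using assms by linarith
  thus ?thesis by (simp add: alpha_sel_def)
qed

theorem mainTheorem11:
  fixes A :: "complex^'N^'n" and x0 :: "real^'n" and pos :: bool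
  assumes iso: "A ** adj A = mat 1"
    and x0X: "inX pos x0" and x0nz: "x0 \<noteq> 0"
    and lam: "lambda2 A x0 < 1"
  shows "\<forall>\<epsilon>. 0 < \<epsilon> \<and> \<epsilon> < 1 - (lambda2 A x0)\<^sup>2 \<longrightarrow>
    (\<exists>U. open U \<and> x0 \<in> U \<and>
      (\<forall>x1\<in>U. \<forall>k::nat. k \<ge> 1 \<longrightarrow>
         norm (alpha_sel pos x0 ((PR_map pos A x0 ^^ k) x1) *\<^sub>R (PR_map pos A x0 ^^ k) x1 - x0)
         \<le> ((lambda2 A x0)\<^sup>2 + \<epsilon>) *
           norm (alpha_sel pos x0 ((PR_map pos A x0 ^^ (k - 1)) x1) *\<^sub>R (PR_map pos A x0 ^^ (k - 1)) x1 - x0)))"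
proof (intro allI impI)
  fix \<epsilon> :: real
  assume eps: "0 < \<epsilon> \<and> \<epsilon> < 1 - (lambda2 A x0)\<^sup>2"
  define F where "F = PR_map pos A x0"
  define c where "c = (lambda2 A x0)\<^sup>2 + \<epsilon>"
  define d0 where "d0 = delta0 A x0"
  define \<delta> where "\<delta> = min (min (d0/2) (\<epsilon>*d0/4)) (norm x0)"
  have d0: "0 < d0" unfolding d0_def by (rule delta0_pos)
  have c1: "c < 1" "0 \<le> c" using eps by (auto simp: c_def)
  have dpos: "0 < \<delta>" using d0 eps x0nz by (simp add: \<delta>_def)
  have contr: "norm (F x - x0) \<le> c * norm (x - x0)" if "norm (x - x0) < \<delta>" for x
  proof -
    define n where "n = norm (x - x0)"
    have n: "0 \<le> n" "n \<le> d0/2" "n \<le> \<epsilon>*d0/4" using that by (auto simp: n_def \<delta>_def)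
    have "norm (F x - x0) \<le> (lambda2 A x0)^2 * n + 4 / d0 * n^2"
      unfolding F_def n_def d0_def by (rule one_step[OF iso x0X x0nz]) (use n in \<open>simp add: n_def d0_def\<close>)
    also have "4 / d0 * n^2 \<le> \<epsilon> * n"
    proof -
      have "4 / d0 * n^2 = (4/d0 * n) * n" by (simp add: power2_eq_square)
      also have "\<dots> \<le> \<epsilon> * n" using n d0 by (intro mult_right_mono) (auto simp: field_simps)
      finally show ?thesis .
    qed
    finally show ?thesis by (simp add: c_def n_def algebra_simps)
  qed
  have inU: "norm (F x - x0) < \<delta>" if "norm (x - x0) < \<delta>" for x
  proof -
    have "c * norm (x - x0) \<le> norm (x - x0)" using c1 by (simp add: mult_left_le_one_le)
    thus ?thesis using contr[OF that] that by linarith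
  qed
  have iter: "norm ((F ^^ k) x1 - x0) < \<delta>" if "norm (x1 - x0) < \<delta>" for k x1
    using that by (induction k) (auto intro: inU)
  show "\<exists>U. open U \<and> x0 \<in> U \<and>
      (\<forall>x1\<in>U. \<forall>k::nat. k \<ge> 1 \<longrightarrow>
         norm (alpha_sel pos x0 ((PR_map pos A x0 ^^ k) x1) *\<^sub>R (PR_map pos A x0 ^^ k) x1 - x0)
         \<le> ((lambda2 A x0)\<^sup>2 + \<epsilon>) *
           norm (alpha_sel pos x0 ((PR_map pos A x0 ^^ (k - 1)) x1) *\<^sub>R (PR_map pos A x0 ^^ (k - 1)) x1 - x0))"
  proof (intro exI[of _ "ball x0 \<delta>"] conjI ballI allI impI)
    show "open (ball x0 \<delta>)" by simp
    show "x0 \<in> ball x0 \<delta>" using dpos by simp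
    fix x1 and k :: nat
    assume x1: "x1 \<in> ball x0 \<delta>" and k: "1 \<le> k"
    have x1n: "norm (x1 - x0) < \<delta>" using x1 by (simp add: dist_norm norm_minus_commute)
    obtain m where km: "k = Suc m" using k by (cases k) auto
    have al: "alpha_sel pos x0 ((F ^^ j) x1) = 1" for j
      by (rule alpha_one) (use iter[OF x1n, of j] in \<open>simp add: \<delta>_def\<close>)
    have "norm ((F ^^ Suc m) x1 - x0) \<le> c * norm ((F ^^ m) x1 - x0)"
      using contr[OF iter[OF x1n, of m]] by simp
    thus "norm (alpha_sel pos x0 ((PR_map pos A x0 ^^ k) x1) *\<^sub>R (PR_map pos A x0 ^^ k) x1 - x0)
         \<le> ((lambda2 A x0)\<^sup>2 + \<epsilon>) *
           norm (alpha_sel pos x0 ((PR_map pos A x0 ^^ (k - 1)) x1) *\<^sub>R (PR_map pos A x0 ^^ (k - 1)) x1 - x0)"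
      using al[of "Suc m"] al[of m] unfolding F_def c_def km by simp
  qed
qed

end
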